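(* If $\mathcal{Q}\subseteq 2^E$ ($E$ finite) is weakly Rayleigh, then all maximal elements of $\mathcal{Q}$ (under inclusion) have the same cardinality $r$, and all minimal elements of $\mathcal{Q}$ have the same cardinality $s$.
   Context: For $\omega:2^E\to[0,\infty)$ not identically zero, $Z(\omega;\mathbf{y})=\sum_S\omega(S)\prod_{e\in S}y_e$; with subscripts denoting partial derivatives, $Z$ is Rayleigh if $Z_eZ_f-Z_{ef}Z\ge0$ for all distinct $e,f$ and all positive $\mathbf{y}$. $\mathcal{Q}$ is weakly Rayleigh if some $\omega\ge0$ with $\{S:\omega(S)>0\}=\mathcal{Q}$ has $Z(\omega;\mathbf{y})$ Rayleigh. *)

theory Defs
  imports Main "HOL-Analysis.Analysis"
begin

definition genpoly :: "'a set \<Rightarrow> ('a set \<Rightarrow> real) \<Rightarrow> ('a \<Rightarrow> real) \<Rightarrow> real" where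
  "genpoly E \<omega> y = (\<Sum>S\<in>Pow E. \<omega> S * (\<Prod>e\<in>S. y e))"

text \<open>Partial derivative with respect to y_e of the multiaffine polynomial genpoly E \<omega>.\<close>
definition genpoly_d1 :: "'a set \<Rightarrow> ('a set \<Rightarrow> real) \<Rightarrow> 'a \<Rightarrow> ('a \<Rightarrow> real) \<Rightarrow> real" where
  "genpoly_d1 E \<omega> e y = (\<Sum>S\<in>{S\<in>Pow E. e \<in> S}. \<omega> S * (\<Prod>g\<in>S - {e}. y g))"

text \<open>Mixed second partial derivative with respect to y_e and y_f (e \<noteq> f).\<close>
definition genpoly_d2 :: "'a set \<Rightarrow> ('a set \<Rightarrow> real) \<Rightarrow> 'a \<Rightarrow> 'a \<Rightarrow> ('a \<Rightarrow> real) \<Rightarrow> real" where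
  "genpoly_d2 E \<omega> e f y = (\<Sum>S\<in>{S\<in>Pow E. e \<in> S \<and> f \<in> S}. \<omega> S * (\<Prod>g\<in>S - {e, f}. y g))"

definition rayleigh :: "'a set \<Rightarrow> ('a set \<Rightarrow> real) \<Rightarrow> bool" where
  "rayleigh E \<omega> \<longleftrightarrow>
     (\<forall>e\<in>E. \<forall>f\<in>E. e \<noteq> f \<longrightarrow>
       (\<forall>y. (\<forall>g\<in>E. y g > 0) \<longrightarrow>
          genpoly_d1 E \<omega> e y * genpoly_d1 E \<omega> f y - genpoly_d2 E \<omega> e f y * genpoly E \<omega> y \<ge> 0))"

definition weakly_rayleigh :: "'a set \<Rightarrow> 'a set set \<Rightarrow> bool" where
  "weakly_rayleigh E Q \<longleftrightarrow>
     (\<exists>\<omega> :: 'a set \<Rightarrow> real.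
        (\<forall>S. \<omega> S \<ge> 0) \<and> (\<exists>S. \<omega> S \<noteq> 0) \<and>
        {S. \<omega> S > 0} = Q \<and> rayleigh E \<omega>)"

end

theory Submission
  imports Defs
begin

lemma split_sum:
  fixes g :: "'b \<Rightarrow> real"
  assumes "finite A"
  shows "sum g A = sum g {x\<in>A. P x} + sum g {x\<in>A. \<not> P x}"
proof -
  have "sum g A = sum g (A \<inter> {x. P x}) + sum g (A - {x. P x})"
    using sum.Int_Diff[OF assms] by blast
  moreover have "A \<inter> {x. P x} = {x\<in>A. P x}" "A - {x. P x} = {x\<in>A. \<not> P x}" by auto
  ultimately show ?thesis by simp
qed

lemma decomp:
  assumes fin: "finite E" and ef: "e \<noteq> f"
  shows "genpoly_d1 E \<omega> e y * genpoly_d1 E \<omega> f y - genpoly_d2 E \<omega> e f y * genpoly E \<omega> y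
    = (\<Sum>S\<in>{S\<in>Pow E. e\<in>S \<and> f\<notin>S}. \<omega> S * (\<Prod>g\<in>S-{e}. y g))
      * (\<Sum>S\<in>{S\<in>Pow E. f\<in>S \<and> e\<notin>S}. \<omega> S * (\<Prod>g\<in>S-{f}. y g))
      - (\<Sum>S\<in>{S\<in>Pow E. e\<notin>S \<and> f\<notin>S}. \<omega> S * (\<Prod>g\<in>S. y g)) * genpoly_d2 E \<omega> e f y"
proof -
  define a where "a = (\<Sum>S\<in>{S\<in>Pow E. e\<notin>S \<and> f\<notin>S}. \<omega> S * (\<Prod>g\<in>S. y g))"
  define b where "b = (\<Sum>S\<in>{S\<in>Pow E. e\<in>S \<and> f\<notin>S}. \<omega> S * (\<Prod>g\<in>S-{e}. y g))"
  define c where "c = (\<Sum>S\<in>{S\<in>Pow E. f\<in>S \<and> e\<notin>S}. \<omega> S * (\<Prod>g\<in>S-{f}. y g))"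
  define d where "d = genpoly_d2 E \<omega> e f y"
  have finP: "finite {S\<in>Pow E. P S}" for P using fin by simp
  have finS: "finite S" if "S \<in> Pow E" for S using that fin finite_subset by blast
  have r1: "(\<Prod>g\<in>S-{e}. y g) = y f * (\<Prod>g\<in>S-{e,f}. y g)" if "S \<in> Pow E" "e\<in>S" "f\<in>S" for S
  proof -
    have "(\<Prod>g\<in>S-{e}. y g) = y f * (\<Prod>g\<in>S-{e}-{f}. y g)"
      using prod.remove[of "S-{e}" f y] finS[OF that(1)] that ef by auto
    moreover have "S-{e}-{f} = S-{e,f}" by auto
    ultimately show ?thesis by simp
  qed
  have r2: "(\<Prod>g\<in>S-{f}. y g) = y e * (\<Prod>g\<in>S-{e,f}. y g)" if "S \<in> Pow E" "e\<in>S" "f\<in>S" for S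
  proof -
    have "(\<Prod>g\<in>S-{f}. y g) = y e * (\<Prod>g\<in>S-{f}-{e}. y g)"
      using prod.remove[of "S-{f}" e y] finS[OF that(1)] that ef by auto
    moreover have "S-{f}-{e} = S-{e,f}" by auto
    ultimately show ?thesis by simp
  qed
  have r3: "(\<Prod>g\<in>S. y g) = y e * (\<Prod>g\<in>S-{e}. y g)" if "S \<in> Pow E" "e\<in>S" for S
    using prod.remove[of S e y] finS[OF that(1)] that by auto
  have r4: "(\<Prod>g\<in>S. y g) = y f * (\<Prod>g\<in>S-{f}. y g)" if "S \<in> Pow E" "f\<in>S" for S
    using prod.remove[of S f y] finS[OF that(1)] that by auto
  have d1e: "genpoly_d1 E \<omega> e y = b + y f * d"
  proof -
    have "genpoly_d1 E \<omega> e y = (\<Sum>S\<in>{S\<in>{S\<in>Pow E. e\<in>S}. f \<notin> S}. \<omega> S * (\<Prod>g\<in>S - {e}. y g))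
       + (\<Sum>S\<in>{S\<in>{S\<in>Pow E. e\<in>S}. \<not> f \<notin> S}. \<omega> S * (\<Prod>g\<in>S - {e}. y g))"
      unfolding genpoly_d1_def by (rule split_sum[OF finP])
    moreover have "{S\<in>{S\<in>Pow E. e\<in>S}. f \<notin> S} = {S\<in>Pow E. e\<in>S \<and> f\<notin>S}" by auto
    moreover have "{S\<in>{S\<in>Pow E. e\<in>S}. \<not> f \<notin> S} = {S\<in>Pow E. e\<in>S \<and> f\<in>S}" by auto
    moreover have "(\<Sum>S\<in>{S\<in>Pow E. e\<in>S \<and> f\<in>S}. \<omega> S * (\<Prod>g\<in>S - {e}. y g)) = y f * d"
      unfolding d_def genpoly_d2_def sum_distrib_left
      by (rule sum.cong) (auto simp: r1)
    ultimately show ?thesis unfolding b_def by simp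
  qed
  have d1f: "genpoly_d1 E \<omega> f y = c + y e * d"
  proof -
    have "genpoly_d1 E \<omega> f y = (\<Sum>S\<in>{S\<in>{S\<in>Pow E. f\<in>S}. e \<notin> S}. \<omega> S * (\<Prod>g\<in>S - {f}. y g))
       + (\<Sum>S\<in>{S\<in>{S\<in>Pow E. f\<in>S}. \<not> e \<notin> S}. \<omega> S * (\<Prod>g\<in>S - {f}. y g))"
      unfolding genpoly_d1_def by (rule split_sum[OF finP])
    moreover have "{S\<in>{S\<in>Pow E. f\<in>S}. e \<notin> S} = {S\<in>Pow E. f\<in>S \<and> e\<notin>S}" by auto
    moreover have "{S\<in>{S\<in>Pow E. f\<in>S}. \<not> e \<notin> S} = {S\<in>Pow E. e\<in>S \<and> f\<in>S}" by auto
    moreover have "(\<Sum>S\<in>{S\<in>Pow E. e\<in>S \<and> f\<in>S}. \<omega> S * (\<Prod>g\<in>S - {f}. y g)) = y e * d"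
      unfolding d_def genpoly_d2_def sum_distrib_left
      by (rule sum.cong) (auto simp: r2)
    ultimately show ?thesis unfolding c_def by simp
  qed
  have Z: "genpoly E \<omega> y = a + y e * b + y f * c + y e * y f * d"
  proof -
    let ?h = "\<lambda>S. \<omega> S * (\<Prod>g\<in>S. y g)"
    have s1: "genpoly E \<omega> y = sum ?h {S\<in>Pow E. e\<in>S} + sum ?h {S\<in>Pow E. e\<notin>S}"
      unfolding genpoly_def by (rule split_sum[OF fin[THEN finite_Pow_iff[THEN iffD2]]])
    have s2: "sum ?h {S\<in>Pow E. e\<in>S} = sum ?h {S\<in>{S\<in>Pow E. e\<in>S}. f\<in>S} + sum ?h {S\<in>{S\<in>Pow E. e\<in>S}. f\<notin>S}"
      by (rule split_sum[OF finP])
    have s3: "sum ?h {S\<in>Pow E. e\<notin>S} = sum ?h {S\<in>{S\<in>Pow E. e\<notin>S}. f\<in>S} + sum ?h {S\<in>{S\<in>Pow E. e\<notin>S}. f\<notin>S}"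
      by (rule split_sum[OF finP])
    have q1: "sum ?h {S\<in>{S\<in>Pow E. e\<in>S}. f\<in>S} = y e * y f * d"
      unfolding d_def genpoly_d2_def sum_distrib_left
      by (rule sum.cong) (auto simp: r3 r1)
    have q2: "sum ?h {S\<in>{S\<in>Pow E. e\<in>S}. f\<notin>S} = y e * b"
      unfolding b_def sum_distrib_left
      by (rule sum.cong) (auto simp: r3)
    have q3: "sum ?h {S\<in>{S\<in>Pow E. e\<notin>S}. f\<in>S} = y f * c"
      unfolding c_def sum_distrib_left
      by (rule sum.cong) (auto simp: r4)
    have q4: "sum ?h {S\<in>{S\<in>Pow E. e\<notin>S}. f\<notin>S} = a"
      unfolding a_def by (rule sum.cong) auto
    show ?thesis using s1 s2 s3 q1 q2 q3 q4 by simp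
  qed
  have "genpoly_d1 E \<omega> e y * genpoly_d1 E \<omega> f y - d * genpoly E \<omega> y = b * c - a * d"
    unfolding d1e d1f Z by (simp add: algebra_simps)
  then show ?thesis unfolding a_def b_def c_def d_def .
qed


lemma trop:
  fixes w :: "'a \<Rightarrow> int" and \<omega> :: "'a set \<Rightarrow> real"
  assumes fin: "finite E" and nn: "\<forall>S. \<omega> S \<ge> 0" and Qd: "{S. \<omega> S > 0} = Q"
    and QE: "Q \<subseteq> Pow E" and ray: "rayleigh E \<omega>"
    and e: "e\<in>E" and f: "f\<in>E" and ef: "e\<noteq>f"
    and X: "X\<in>Q" "e\<notin>X" "f\<notin>X" and Y: "Y\<in>Q" "e\<in>Y" "f\<in>Y"
  shows "\<exists>S1\<in>Q. \<exists>S2\<in>Q. e\<in>S1 \<and> f\<notin>S1 \<and> f\<in>S2 \<and> e\<notin>S2 \<and> sum w X + sum w Y \<le> sum w S1 + sum w S2"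
proof (rule ccontr)
  assume H: "\<not> ?thesis"
  define R where "R = sum w X + sum w Y"
  have Hb: "sum w S1 + sum w S2 \<le> R - 1" if "S1\<in>Q" "S2\<in>Q" "e\<in>S1" "f\<notin>S1" "f\<in>S2" "e\<notin>S2" for S1 S2
    using H that R_def by force
  define A1 where "A1 = {S\<in>Pow E. e\<in>S \<and> f\<notin>S}"
  define C1 where "C1 = {S\<in>Pow E. f\<in>S \<and> e\<notin>S}"
  define K where "K = (\<Sum>S\<in>A1. \<omega> S) * (\<Sum>S\<in>C1. \<omega> S)"
  have wX: "\<omega> X > 0" "\<omega> Y > 0" using X Y Qd by auto
  define m where "m = \<omega> X * \<omega> Y"
  have K0: "K \<ge> 0" unfolding K_def using nn by (simp add: sum_nonneg)
  have m0: "m > 0" unfolding m_def using wX by simp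
  define t where "t = K / m + 2"
  have t1: "t > 1" unfolding t_def using K0 m0 by (simp add: add_pos_nonneg)
  have mt: "m * t = K + 2 * m" unfolding t_def using m0 by (simp add: field_simps)
  define y where "y = (\<lambda>g. t powr real_of_int (w g))"
  have ypos: "\<forall>g\<in>E. y g > 0" unfolding y_def using t1 by simp
  have finS: "finite S" if "S \<in> Pow E" for S using that fin finite_subset by blast
  have mono: "(\<Prod>g\<in>S. y g) = t powr real_of_int (sum w S)" for S
    unfolding y_def using t1 by (simp add: powr_sum)
  have sr: "sum w (S - {x}) = sum w S - w x" if "S \<in> Pow E" "x \<in> S" for S x
    using sum.remove[OF finS[OF that(1)] that(2), of w] by simp
  define P where "P = t powr real_of_int (R - 1 - w e - w f)"
  have P0: "P > 0" unfolding P_def using t1 by simp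
  define a where "a = (\<Sum>S\<in>{S\<in>Pow E. e\<notin>S \<and> f\<notin>S}. \<omega> S * (\<Prod>g\<in>S. y g))"
  define b where "b = (\<Sum>S\<in>A1. \<omega> S * (\<Prod>g\<in>S-{e}. y g))"
  define c where "c = (\<Sum>S\<in>C1. \<omega> S * (\<Prod>g\<in>S-{f}. y g))"
  define d where "d = genpoly_d2 E \<omega> e f y"
  have "genpoly_d1 E \<omega> e y * genpoly_d1 E \<omega> f y - genpoly_d2 E \<omega> e f y * genpoly E \<omega> y \<ge> 0"
    using ray e f ef ypos unfolding rayleigh_def by blast
  then have main: "b * c - a * d \<ge> 0"
    unfolding decomp[OF fin ef] a_def b_def c_def d_def A1_def C1_def .
  have bc: "b * c \<le> K * P"
  proof -
    have "b * c = (\<Sum>S1\<in>A1. \<Sum>S2\<in>C1. \<omega> S1 * (\<Prod>g\<in>S1-{e}. y g) * (\<omega> S2 * (\<Prod>g\<in>S2-{f}. y g)))"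
      unfolding b_def c_def by (rule sum_product)
    also have "\<dots> \<le> (\<Sum>S1\<in>A1. \<Sum>S2\<in>C1. \<omega> S1 * \<omega> S2 * P)"
    proof (rule sum_mono, rule sum_mono)
      fix S1 S2 assume S1: "S1 \<in> A1" and S2: "S2 \<in> C1"
      show "\<omega> S1 * (\<Prod>g\<in>S1-{e}. y g) * (\<omega> S2 * (\<Prod>g\<in>S2-{f}. y g)) \<le> \<omega> S1 * \<omega> S2 * P"
      proof (cases "\<omega> S1 > 0 \<and> \<omega> S2 > 0")
        case True
        then have Q12: "S1 \<in> Q" "S2 \<in> Q" using Qd by auto
        have "sum w S1 + sum w S2 \<le> R - 1" using Hb[OF Q12] S1 S2 unfolding A1_def C1_def by auto
        then have le0: "sum w (S1-{e}) + sum w (S2-{f}) \<le> R - 1 - w e - w f"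
          using sr[of S1 e] sr[of S2 f] S1 S2 unfolding A1_def C1_def by simp
        then have le: "real_of_int (sum w (S1-{e})) + real_of_int (sum w (S2-{f})) \<le> real_of_int (R - 1 - w e - w f)"
          by (simp only: of_int_add[symmetric] of_int_le_iff)
        have "(\<Prod>g\<in>S1-{e}. y g) * (\<Prod>g\<in>S2-{f}. y g) = t powr (real_of_int (sum w (S1-{e})) + real_of_int (sum w (S2-{f})))"
          unfolding mono by (simp add: powr_add)
        also have "\<dots> \<le> P" unfolding P_def using le t1 by (intro powr_mono) auto
        finally have "(\<Prod>g\<in>S1-{e}. y g) * (\<Prod>g\<in>S2-{f}. y g) \<le> P" .
        then have "\<omega> S1 * \<omega> S2 * ((\<Prod>g\<in>S1-{e}. y g) * (\<Prod>g\<in>S2-{f}. y g)) \<le> \<omega> S1 * \<omega> S2 * P"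
          using nn by (intro mult_left_mono) auto
        then show ?thesis by (simp add: algebra_simps)
      next
        case False
        then have "\<omega> S1 = 0 \<or> \<omega> S2 = 0" using nn[rule_format, of S1] nn[rule_format, of S2] by linarith
        then show ?thesis using nn P0 by auto
      qed
    qed
    also have "\<dots> = K * P"
      unfolding K_def sum_product sum_distrib_right by (simp add: sum_distrib_left sum_distrib_right mult.assoc)
    finally show ?thesis .
  qed
  have ad: "a * d \<ge> m * t * P"
  proof -
    have Xin: "X \<in> {S\<in>Pow E. e\<notin>S \<and> f\<notin>S}" using X QE by auto
    have Yin: "Y \<in> {S\<in>Pow E. e\<in>S \<and> f\<in>S}" using Y QE by auto
    have ya: "\<omega> X * (\<Prod>g\<in>X. y g) \<le> a" unfolding a_def
      by (rule member_le_sum[OF Xin]) (use nn ypos mono t1 fin in auto)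
    have yd: "\<omega> Y * (\<Prod>g\<in>Y-{e,f}. y g) \<le> d" unfolding d_def genpoly_d2_def
      by (rule member_le_sum[OF Yin]) (use nn ypos mono t1 fin in auto)
    have "Y - {e,f} = Y - {e} - {f}" by auto
    then have sY: "sum w (Y - {e,f}) = sum w Y - w e - w f"
      proof -
      have YE: "Y \<subseteq> E" using Y QE by auto
      then have "Y - {e} \<subseteq> E" by auto
      then show ?thesis using sr[of Y e] sr[of "Y-{e}" f] Y YE ef \<open>Y - {e,f} = Y - {e} - {f}\<close> by simp
    qed
    have "(\<Prod>g\<in>X. y g) * (\<Prod>g\<in>Y-{e,f}. y g) = t powr (real_of_int (R - 1 - w e - w f) + 1)"
    proof -
      have ieq: "sum w X + sum w (Y - {e,f}) = (R - 1 - w e - w f) + 1" using sY R_def by simp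
      then have "real_of_int (sum w X) + real_of_int (sum w (Y-{e,f})) = real_of_int (R - 1 - w e - w f) + 1"
        by (metis of_int_add of_int_1)
      then show ?thesis unfolding mono powr_add[symmetric] by (rule arg_cong[where f="\<lambda>z. t powr z"])
    qed
    also have "\<dots> = t * P" unfolding P_def powr_add using t1 by simp
    finally have pr: "(\<Prod>g\<in>X. y g) * (\<Prod>g\<in>Y-{e,f}. y g) = t * P" .
    have "m * t * P = (\<omega> X * (\<Prod>g\<in>X. y g)) * (\<omega> Y * (\<Prod>g\<in>Y-{e,f}. y g))"
      unfolding m_def using pr by (simp add: algebra_simps)
    also have "\<dots> \<le> a * d"
    proof (rule mult_mono[OF ya yd])
      have "0 \<le> \<omega> X * (\<Prod>g\<in>X. y g)" using wX t1 by (simp add: mono)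
      then show "0 \<le> a" using ya by linarith
      show "0 \<le> \<omega> Y * (\<Prod>g\<in>Y-{e,f}. y g)" using wX t1 by (simp add: mono)
    qed
    finally show ?thesis .
  qed
  have "b * c - a * d \<le> K * P - m * t * P" using bc ad by simp
  also have "\<dots> = - 2 * m * P" using mt by (simp add: algebra_simps)
  also have "\<dots> < 0" using m0 P0 by simp
  finally show False using main by simp
qed


lemma card_split: "finite S \<Longrightarrow> card S = card (S \<inter> U) + card (S - U)"
  by (metis Int_Diff_Un Int_Diff_disjoint card_Un_disjoint finite_Diff finite_Int)

lemma sum_two:
  fixes p q :: int
  assumes "finite S"
  shows "(\<Sum>g\<in>S. if g \<in> U then p else q) = int (card (S \<inter> U)) * p + int (card (S - U)) * q"
proof -
  have "(\<Sum>g\<in>S. if g \<in> U then p else q) = (\<Sum>g\<in>S \<inter> U. if g \<in> U then p else q) + (\<Sum>g\<in>S - U. if g \<in> U then p else q)"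
    using sum.Int_Diff[OF assms] by blast
  also have "(\<Sum>g\<in>S \<inter> U. if g \<in> U then p else q) = (\<Sum>g\<in>S \<inter> U. p)" by (rule sum.cong) auto
  also have "(\<Sum>g\<in>S - U. if g \<in> U then p else q) = (\<Sum>g\<in>S - U. q)" by (rule sum.cong) auto
  finally show ?thesis by simp
qed

lemma two_elems:
  assumes "finite D" "card D \<ge> 2"
  obtains e f where "e \<in> D" "f \<in> D" "e \<noteq> f"
proof -
  from assms have "D \<noteq> {}" by auto
  then obtain e where e: "e \<in> D" by blast
  have "card (D - {e}) \<ge> 1" using assms e by simp
  then have "D - {e} \<noteq> {}" by (intro notI) simp
  then obtain f where "f \<in> D - {e}" by blast
  then show ?thesis using that e by blast
qed

lemma maxpart:
  assumes fin: "finite E" and QE: "Q \<subseteq> Pow E"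
  and TR: "\<And>(w::'a\<Rightarrow>int) e f X Y. e\<in>E \<Longrightarrow> f\<in>E \<Longrightarrow> e\<noteq>f \<Longrightarrow> X\<in>Q \<Longrightarrow> e\<notin>X \<Longrightarrow> f\<notin>X
      \<Longrightarrow> Y\<in>Q \<Longrightarrow> e\<in>Y \<Longrightarrow> f\<in>Y \<Longrightarrow>
      \<exists>S1\<in>Q. \<exists>S2\<in>Q. e\<in>S1 \<and> f\<notin>S1 \<and> f\<in>S2 \<and> e\<notin>S2 \<and> sum w X + sum w Y \<le> sum w S1 + sum w S2"
  and A: "A \<in> Q" and Amax: "\<forall>B\<in>Q. A \<subseteq> B \<longrightarrow> B = A"
  shows "\<forall>B\<in>Q. card B \<le> card A"
proof -
  have finQ: "finite S" if "S \<in> Q" for S using that QE fin finite_subset by blast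
  have AE: "A \<subseteq> E" using A QE by auto
  have "\<forall>B\<in>Q. card (B - A) = n \<longrightarrow> card B \<le> card A" for n
  proof (induction n rule: less_induct)
    case (less n)
    show ?case
    proof (intro ballI impI)
      fix B assume B: "B \<in> Q" and n: "card (B - A) = n"
      show "card B \<le> card A"
      proof (rule ccontr)
        assume big: "\<not> card B \<le> card A"
        have BE: "B \<subseteq> E" using B QE by auto
        have "\<not> A \<subseteq> B" using Amax B big by auto
        then have "A - B \<noteq> {}" by auto
        then have c1: "card (A - B) \<ge> 1" using finQ[OF A] by (simp add: Suc_leI card_gt_0_iff)
        have cA: "card A = card (A \<inter> B) + card (A - B)" using card_split finQ[OF A] by blast
        have cB: "card B = card (A \<inter> B) + card (B - A)" using card_split[OF finQ[OF B], of A] by (simp add: Int_commute)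
        have c2: "card (B - A) \<ge> 2" using cA cB c1 big by linarith
        obtain e f where ef: "e \<in> B - A" "f \<in> B - A" "e \<noteq> f"
          using two_elems[OF _ c2] finQ[OF B] by blast
        define U where "U = A \<union> B"
        define N :: int where "N = 2 * int (card E) + 1"
        define w :: "'a \<Rightarrow> int" where "w = (\<lambda>g. if g \<in> U then 1 else - N)"
        have sw: "sum w S = int (card (S \<inter> U)) - N * int (card (S - U))" if "S \<subseteq> E" for S
          unfolding w_def using sum_two[of S U 1 "-N"] that fin finite_subset by fastforce
        have cle: "card (S \<inter> U) \<le> card E" if "S \<subseteq> E" for S
          using that fin by (meson card_mono inf.coboundedI1)
        obtain S1 S2 where S: "S1 \<in> Q" "S2 \<in> Q" "e\<in>S1" "f\<notin>S1" "f\<in>S2" "e\<notin>S2"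
          and ineq: "sum w A + sum w B \<le> sum w S1 + sum w S2"
        proof -
          have "e \<in> E" "f \<in> E" using ef BE by auto
          then show ?thesis using TR[of e f A B w] ef B A that by blast
        qed
        have S1E: "S1 \<subseteq> E" and S2E: "S2 \<subseteq> E" using S QE by auto
        have AU: "A - U = {}" "B - U = {}" "A \<inter> U = A" "B \<inter> U = B" unfolding U_def by auto
        have "card (A - U) = 0" "card (B - U) = 0" unfolding AU by simp_all
        then have wA: "sum w A = int (card A)" and wB: "sum w B = int (card B)"
          using sw[OF AE] sw[OF BE] AU by simp_all
        have inU: "S1 \<subseteq> U \<and> S2 \<subseteq> U"
        proof (rule ccontr)
          assume "\<not> (S1 \<subseteq> U \<and> S2 \<subseteq> U)"
          then have "card (S1 - U) + card (S2 - U) \<ge> 1"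
            using finQ[OF S(1)] finQ[OF S(2)] by (auto simp: Suc_leI card_gt_0_iff)
          then have "int (card (S1 - U)) + int (card (S2 - U)) \<ge> 1" by linarith
          then have "N * (int (card (S1 - U)) + int (card (S2 - U))) \<ge> N * 1"
            by (rule mult_left_mono) (simp add: N_def)
          then have "N * int (card (S1 - U)) + N * int (card (S2 - U)) \<ge> N"
            by (simp add: distrib_left)
          then have "sum w S1 + sum w S2 \<le> 2 * int (card E) - N"
            using sw[OF S1E] sw[OF S2E] cle[OF S1E] cle[OF S2E] by linarith
          then show False using ineq wA wB unfolding N_def by linarith
        qed
        have SU: "S1 - U = {}" "S2 - U = {}" "S1 \<inter> U = S1" "S2 \<inter> U = S2" using inU by auto
        have "card (S1 - U) = 0" "card (S2 - U) = 0" unfolding SU by simp_all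
        then have w1: "sum w S1 = int (card S1)" and w2: "sum w S2 = int (card S2)"
          using sw[OF S1E] sw[OF S2E] SU by simp_all
        have finBA: "finite (B - A)" using finQ[OF B] by simp
        have "S1 - A \<subset> B - A" using inU S ef unfolding U_def by blast
        then have "card (S1 - A) < n" using n psubset_card_mono[OF finBA] by blast
        then have k1: "card S1 \<le> card A" using less.IH S(1) by blast
        have "S2 - A \<subset> B - A" using inU S ef unfolding U_def by blast
        then have "card (S2 - A) < n" using n psubset_card_mono[OF finBA] by blast
        then have k2: "card S2 \<le> card A" using less.IH S(2) by blast
        show False using ineq wA wB w1 w2 k1 k2 big by linarith
      qed
    qed
  qed
  then show ?thesis by blast
qed


lemma minpart:
  assumes fin: "finite E" and QE: "Q \<subseteq> Pow E"
  and TR: "\<And>(w::'a\<Rightarrow>int) e f X Y. e\<in>E \<Longrightarrow> f\<in>E \<Longrightarrow> e\<noteq>f \<Longrightarrow> X\<in>Q \<Longrightarrow> e\<notin>X \<Longrightarrow> f\<notin>X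
      \<Longrightarrow> Y\<in>Q \<Longrightarrow> e\<in>Y \<Longrightarrow> f\<in>Y \<Longrightarrow>
      \<exists>S1\<in>Q. \<exists>S2\<in>Q. e\<in>S1 \<and> f\<notin>S1 \<and> f\<in>S2 \<and> e\<notin>S2 \<and> sum w X + sum w Y \<le> sum w S1 + sum w S2"
  and A: "A \<in> Q" and Amin: "\<forall>B\<in>Q. B \<subseteq> A \<longrightarrow> B = A"
  shows "\<forall>B\<in>Q. card A \<le> card B"
proof -
  have finQ: "finite S" if "S \<in> Q" for S using that QE fin finite_subset by blast
  have AE: "A \<subseteq> E" using A QE by auto
  have "\<forall>B\<in>Q. card (A - B) = n \<longrightarrow> card A \<le> card B" for n
  proof (induction n rule: less_induct)
    case (less n)
    show ?case
    proof (intro ballI impI)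
      fix B assume B: "B \<in> Q" and n: "card (A - B) = n"
      show "card A \<le> card B"
      proof (rule ccontr)
        assume small: "\<not> card A \<le> card B"
        have BE: "B \<subseteq> E" using B QE by auto
        have "\<not> B \<subseteq> A" using Amin B small by auto
        then have "B - A \<noteq> {}" by auto
        then have c1: "card (B - A) \<ge> 1" using finQ[OF B] by (simp add: Suc_leI card_gt_0_iff)
        have cA: "card A = card (A \<inter> B) + card (A - B)" using card_split finQ[OF A] by blast
        have cB: "card B = card (A \<inter> B) + card (B - A)" using card_split[OF finQ[OF B], of A] by (simp add: Int_commute)
        have c2: "card (A - B) \<ge> 2" using cA cB c1 small by linarith
        obtain e f where ef: "e \<in> A - B" "f \<in> A - B" "e \<noteq> f"
          using two_elems[OF _ c2] finQ[OF A] by blast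
        define I where "I = A \<inter> B"
        define N :: int where "N = 2 * int (card E) + 1"
        define w :: "'a \<Rightarrow> int" where "w = (\<lambda>g. if g \<in> I then N else - 1)"
        have sw: "sum w S = N * int (card (S \<inter> I)) - int (card (S - I))" if "S \<subseteq> E" for S
          unfolding w_def using sum_two[of S I N "-1"] that fin finite_subset by fastforce
        have cle: "card (S - I) \<le> card E" if "S \<subseteq> E" for S
          using that fin by (meson card_mono Diff_subset order_trans)
        obtain S1 S2 where S: "S1 \<in> Q" "S2 \<in> Q" "e\<in>S1" "f\<notin>S1" "f\<in>S2" "e\<notin>S2"
          and ineq: "sum w B + sum w A \<le> sum w S1 + sum w S2"
        proof -
          have "e \<in> E" "f \<in> E" using ef AE by auto
          then show ?thesis using TR[of e f B A w] ef B A that by blast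
        qed
        have S1E: "S1 \<subseteq> E" and S2E: "S2 \<subseteq> E" using S QE by auto
        have finI: "finite I" using finQ[OF A] I_def by simp
        have AI: "A \<inter> I = I" "B \<inter> I = I" "A - I = A - B" "B - I = B - A" unfolding I_def by auto
        have wA: "sum w A = N * int (card I) - int (card (A - B))"
          using sw[OF AE] AI by simp
        have wB: "sum w B = N * int (card I) - int (card (B - A))"
          using sw[OF BE] AI by simp
        have N0: "N \<ge> 0" unfolding N_def by simp
        have cAB: "card (A - B) \<le> card E" "card (B - A) \<le> card E"
          using AE BE fin by (meson card_mono Diff_subset order_trans)+
        have cSI: "card (S \<inter> I) \<le> card I" for S using finI by (simp add: card_mono)
        have inI: "I \<subseteq> S1 \<and> I \<subseteq> S2"
        proof (rule ccontr)
          assume "\<not> (I \<subseteq> S1 \<and> I \<subseteq> S2)"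
          then have "S1 \<inter> I \<subset> I \<or> S2 \<inter> I \<subset> I" by blast
          then have "card (S1 \<inter> I) < card I \<or> card (S2 \<inter> I) < card I"
            using psubset_card_mono[OF finI] by blast
          then have "int (card (S1 \<inter> I)) + int (card (S2 \<inter> I)) \<le> 2 * int (card I) - 1"
            using cSI[of S1] cSI[of S2] by linarith
          then have "N * (int (card (S1 \<inter> I)) + int (card (S2 \<inter> I))) \<le> N * (2 * int (card I) - 1)"
            by (rule mult_left_mono) (rule N0)
          then have "sum w S1 + sum w S2 \<le> N * (2 * int (card I) - 1)"
            using sw[OF S1E] sw[OF S2E] by (simp add: distrib_left)
          then show False using ineq wA wB cAB unfolding N_def by (simp add: algebra_simps)
        qed
        have SI: "S1 \<inter> I = I" "S2 \<inter> I = I" using inI by auto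
        have cS1: "card S1 = card I + card (S1 - I)"
          using card_split[OF finQ[OF S(1)], of I] SI by simp
        have cS2: "card S2 = card I + card (S2 - I)"
          using card_split[OF finQ[OF S(2)], of I] SI by simp
        have w1: "sum w S1 = N * int (card I) - int (card (S1 - I))" using sw[OF S1E] SI by simp
        have w2: "sum w S2 = N * int (card I) - int (card (S2 - I))" using sw[OF S2E] SI by simp
        have finAB: "finite (A - B)" using finQ[OF A] by simp
        have "A - S1 \<subset> A - B" using inI S ef unfolding I_def by blast
        then have "card (A - S1) < n" using n psubset_card_mono[OF finAB] by blast
        then have k1: "card A \<le> card S1" using less.IH S(1) by blast
        have "A - S2 \<subset> A - B" using inI S ef unfolding I_def by blast
        then have "card (A - S2) < n" using n psubset_card_mono[OF finAB] by blast
        then have k2: "card A \<le> card S2" using less.IH S(2) by blast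
        show False using ineq wA wB w1 w2 k1 k2 cS1 cS2 cA cB small unfolding I_def by linarith
      qed
    qed
  qed
  then show ?thesis by blast
qed


theorem corollary4p8:
  fixes E :: "'a set" and Q :: "'a set set"
  assumes "finite E" and "Q \<subseteq> Pow E" and "weakly_rayleigh E Q"
  shows "(\<exists>r. \<forall>A\<in>Q. (\<forall>B\<in>Q. A \<subseteq> B \<longrightarrow> B = A) \<longrightarrow> card A = r)
       \<and> (\<exists>s. \<forall>A\<in>Q. (\<forall>B\<in>Q. B \<subseteq> A \<longrightarrow> B = A) \<longrightarrow> card A = s)"
proof -
  obtain \<omega> :: "'a set \<Rightarrow> real" where nn: "\<forall>S. \<omega> S \<ge> 0" and Qd: "{S. \<omega> S > 0} = Q"
    and ray: "rayleigh E \<omega>"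
    using assms(3) unfolding weakly_rayleigh_def by blast
  have TR: "\<And>(w::'a\<Rightarrow>int) e f X Y. e\<in>E \<Longrightarrow> f\<in>E \<Longrightarrow> e\<noteq>f \<Longrightarrow> X\<in>Q \<Longrightarrow> e\<notin>X \<Longrightarrow> f\<notin>X
      \<Longrightarrow> Y\<in>Q \<Longrightarrow> e\<in>Y \<Longrightarrow> f\<in>Y \<Longrightarrow>
      \<exists>S1\<in>Q. \<exists>S2\<in>Q. e\<in>S1 \<and> f\<notin>S1 \<and> f\<in>S2 \<and> e\<notin>S2 \<and> sum w X + sum w Y \<le> sum w S1 + sum w S2"
    by (rule trop[OF assms(1) nn Qd assms(2) ray]; assumption)
  have "finite Q" using assms(1) by (intro finite_subset[OF assms(2)]) simp
  then have finC: "finite (card ` Q)" by (rule finite_imageI)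
  have P1: "\<forall>A\<in>Q. (\<forall>B\<in>Q. A \<subseteq> B \<longrightarrow> B = A) \<longrightarrow> card A = Max (card ` Q)"
  proof (intro ballI impI)
    fix A assume A: "A \<in> Q" and m: "\<forall>B\<in>Q. A \<subseteq> B \<longrightarrow> B = A"
    have "\<forall>B\<in>Q. card B \<le> card A" using maxpart[OF assms(1,2) TR A m] by blast
    then show "card A = Max (card ` Q)" using A finC by (intro Max_eqI[symmetric]) auto
  qed
  have P2: "\<forall>A\<in>Q. (\<forall>B\<in>Q. B \<subseteq> A \<longrightarrow> B = A) \<longrightarrow> card A = Min (card ` Q)"
  proof (intro ballI impI)
    fix A assume A: "A \<in> Q" and m: "\<forall>B\<in>Q. B \<subseteq> A \<longrightarrow> B = A"
    have "\<forall>B\<in>Q. card A \<le> card B" using minpart[OF assms(1,2) TR A m] by blast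
    then show "card A = Min (card ` Q)" using A finC by (intro Min_eqI[symmetric]) auto
  qed
  show ?thesis using P1 P2 by blast
qed

end
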